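(* For every integer $r\ge1$, $\mathrm{Var}(\mu^{(r)})\le b^2\lambda(r)$.
   Context: Fix an integer $b\ge2$. For $n\in\mathbb{N}$ with base-$b$ digits $n_k$, $s(n):=\sum_kn_k$. For $r,n\in\mathbb{N}$, $\Delta^{(r)}(n):=s(n+r)-s(n)$, and $\mu^{(r)}(d):=\lim_{N\to\infty}\frac1N|\{n<N:\Delta^{(r)}(n)=d\}|$ for $d\in\mathbb{Z}$; these limits exist and $\mu^{(r)}$ is a probability measure on $\mathbb{Z}$ with finite moments; $\mathrm{Var}(\mu^{(r)})$ is its variance. Blocks: write the expansion of $r\ge1$ as the digit string $r_\ell\cdots r_0$, $r_\ell\neq0$. A block is either a maximal run of consecutive $0$ digits (a block of $0$'s), or a maximal run of consecutive digits equal to $b-1$, or (when $b\ge3$) a single digit with value in $\{1,\dots,b-2\}$. $\lambda(r)$ is the number of blocks of $r$ that are not blocks of $0$'s (non-zero blocks). *)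

theory Defs
  imports "HOL-Analysis.Analysis"
begin

definition digit :: "nat \<Rightarrow> nat \<Rightarrow> nat \<Rightarrow> nat" where
  "digit b k n = (n div b ^ k) mod b"

text \<open>Base-b digit sum s(n). For b \<ge> 2 all digits of index \<ge> n+1 vanish.\<close>
definition digsum :: "nat \<Rightarrow> nat \<Rightarrow> nat" where
  "digsum b n = (\<Sum>k\<le>n. digit b k n)"

definition Delta :: "nat \<Rightarrow> nat \<Rightarrow> nat \<Rightarrow> int" where
  "Delta b r n = int (digsum b (n + r)) - int (digsum b n)"

definition mu :: "nat \<Rightarrow> nat \<Rightarrow> int \<Rightarrow> real" where
  "mu b r d = lim (\<lambda>N. real (card {n. n < N \<and> Delta b r n = d}) / real N)"

definition mu_mean :: "nat \<Rightarrow> nat \<Rightarrow> real" where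
  "mu_mean b r = (\<Sum>\<^sub>\<infinity>d\<in>(UNIV::int set). real_of_int d * mu b r d)"

definition mu_var :: "nat \<Rightarrow> nat \<Rightarrow> real" where
  "mu_var b r = (\<Sum>\<^sub>\<infinity>d\<in>(UNIV::int set). (real_of_int d - mu_mean b r)\<^sup>2 * mu b r d)"

text \<open>Number of non-zero blocks of r: each non-zero block is identified by its most
  significant position i, i.e. a position with digit \<noteq> 0 which is either a digit in
  {1..b-2} (a singleton block) or a digit b-1 not followed (in the more significant
  position) by another digit b-1.  Positions above the leading digit have digit 0.\<close>
definition nzblocks :: "nat \<Rightarrow> nat \<Rightarrow> nat" where
  "nzblocks b r = card {i. i \<le> r \<and> digit b i r \<noteq> 0 \<and>
      (digit b i r \<noteq> b - 1 \<or> digit b (Suc i) r \<noteq> b - 1)}"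

end

theory Submission
  imports Defs
begin


lemma digit_zero_big:
  assumes "n < b ^ k" shows "digit b k n = 0"
  using assms by (simp add: digit_def)

lemma digsum_ext:
  assumes b: "2 \<le> b" and "n \<le> N"
  shows "digsum b n = (\<Sum>k\<le>N. digit b k n)"
proof -
  have "(\<Sum>k\<le>N. digit b k n) = (\<Sum>k\<le>n. digit b k n) + (\<Sum>k\<in>{n<..N}. digit b k n)"
  proof -
    have "{..N} = {..n} \<union> {n<..N}" using assms(2) by auto
    thus ?thesis by (subst sum.union_disjoint[symmetric]) auto
  qed
  moreover have "(\<Sum>k\<in>{n<..N}. digit b k n) = 0"
  proof (rule sum.neutral, clarify)
    fix k assume "k \<in> {n<..N}"
    hence "n < k" by simp
    have "k < 2 ^ k" by (rule less_exp)
    also have "2 ^ k \<le> b ^ k" using b by (simp add: power_mono)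
    finally show "digit b k n = 0" using \<open>n<k\<close> by (intro digit_zero_big) simp
  qed
  ultimately show ?thesis by (simp add: digsum_def)
qed

lemma digsum_0 [simp]: "digsum b 0 = 0"
  by (simp add: digsum_def digit_def)

lemma digsum_rec:
  assumes b: "2 \<le> b"
  shows "digsum b n = n mod b + digsum b (n div b)"
proof (cases n)
  case 0 then show ?thesis by simp
next
  case (Suc n')
  have "n div b \<le> n'" using b Suc by (simp add: less_Suc_eq_le[symmetric] div_less_dividend)
  have "digsum b n = (\<Sum>k\<le>Suc n'. digit b k n)" by (simp add: digsum_def Suc)
  also have "\<dots> = digit b 0 n + (\<Sum>k\<le>n'. digit b (Suc k) n)"
    by (rule sum.atMost_Suc_shift)
  also have "\<dots> = digit b 0 n + (\<Sum>k\<le>n'. digit b k (n div b))"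
    by (simp add: digit_def div_mult2_eq mult.commute)
  also have "\<dots> = digit b 0 n + digsum b (n div b)"
    using b \<open>n div b \<le> n'\<close> by (simp add: digsum_ext)
  finally show ?thesis by (simp only: digit_def power_0 div_by_1)
qed


lemma digsum_small: assumes "2 \<le> b" "m < b" shows "digsum b m = m"
  using digsum_rec[OF assms(1), of m] assms by simp

lemma digsum_step: assumes "2 \<le> b" "m0 < b" shows "digsum b (m0 + b * m') = m0 + digsum b m'"
  using digsum_rec[OF assms(1), of "m0 + b*m'"] assms by simp

lemma digsum_shift:
  assumes b: "2 \<le> b" shows "x < b ^ K \<Longrightarrow> digsum b (q * b ^ K + x) = digsum b q + digsum b x"
proof (induction K arbitrary: x q)
  case 0 then show ?case by simp
next
  case (Suc K)
  have bp: "0 < b" using b by simp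
  have x: "x = x mod b + b * (x div b)" by simp
  have xd: "x div b < b ^ K" using Suc.prems bp
    by (simp add: div_less_iff_less_mult mult.commute)
  have "q * b ^ Suc K + x = x mod b + b * (q * b ^ K + x div b)"
    by (subst x) (simp add: algebra_simps)
  hence "digsum b (q * b ^ Suc K + x) = x mod b + digsum b (q * b ^ K + x div b)"
    using digsum_step[OF b, of "x mod b"] bp by simp
  also have "\<dots> = x mod b + digsum b q + digsum b (x div b)"
    using Suc.IH[OF xd] by simp
  also have "\<dots> = digsum b q + digsum b x"
    using digsum_rec[OF b, of x] by simp
  finally show ?case .
qed

lemma digsum_subadd:
  assumes b: "2 \<le> b" shows "digsum b (x + y) \<le> digsum b x + digsum b y"
proof (induction "x + y" arbitrary: x y rule: less_induct)
  case less
  show ?case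
  proof (cases "x + y = 0")
    case True then show ?thesis by simp
  next
    case False
    have bp: "0 < b" using b by simp
    define k where "k = (if b \<le> x mod b + y mod b then 1 else 0::nat)"
    have k1: "k \<le> 1" by (simp add: k_def)
    have eq: "x + y = (x mod b + y mod b - b * k) + b * (x div b + y div b + k)"
      using mod_less_divisor[OF bp, of x] mod_less_divisor[OF bp, of y]
      by (simp add: k_def algebra_simps)
    have m1: "x mod b < b" and m2: "y mod b < b" using bp by auto
    have lt: "x mod b + y mod b - b * k < b"
    proof (cases "b \<le> x mod b + y mod b")
      case True
      hence "b * k = b" by (simp add: k_def)
      thus ?thesis using m1 m2 by linarith
    next
      case False
      hence "b * k = 0" by (simp add: k_def)
      thus ?thesis using False by linarith
    qed
    have "digsum b (x + y) = (x mod b + y mod b - b * k) + digsum b (x div b + y div b + k)"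
      by (subst eq, rule digsum_step[OF b lt])
    moreover have "x div b + y div b + k < x + y"
    proof -
      have "b * (x div b + y div b + k) \<le> x + y" using eq by linarith
      moreover have "x div b + y div b + k \<le> b * (x div b + y div b + k)" using b by simp
      moreover have "x div b + y div b + k \<noteq> x + y \<or> x + y = 0"
      proof (rule ccontr)
        assume "\<not> ?thesis"
        hence "x div b + y div b + k = x + y" "x + y > 0" by auto
        with \<open>b * (x div b + y div b + k) \<le> x + y\<close> b show False by (simp add: mult_le_cancel2)
      qed
      ultimately show ?thesis using False by linarith
    qed
    moreover have "x div b + y div b < x + y"
      using \<open>x div b + y div b + k < x + y\<close> by linarith
    moreover have "digsum b k = k" using k1 b by (intro digsum_small) auto
    ultimately have "digsum b (x + y) \<le> (x mod b + y mod b - b * k) + (digsum b (x div b) + digsum b (y div b) + k)"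
      using less(1)[of "x div b + y div b" k] less(1)[of "x div b" "y div b"] by fastforce
    also have "\<dots> \<le> digsum b x + digsum b y"
    proof (cases "b \<le> x mod b + y mod b")
      case True
      hence "k = 1" by (simp add: k_def)
      thus ?thesis using True digsum_rec[OF b, of x] digsum_rec[OF b, of y] b by simp
    next
      case False
      hence "k = 0" by (simp add: k_def)
      thus ?thesis using digsum_rec[OF b, of x] digsum_rec[OF b, of y] by simp
    qed
    finally show ?thesis .
  qed
qed



definition ovf :: "nat \<Rightarrow> nat \<Rightarrow> nat \<Rightarrow> nat \<Rightarrow> bool" where
  "ovf b J r m = (b ^ J \<le> m + r)"

definition EE :: "nat \<Rightarrow> nat \<Rightarrow> nat \<Rightarrow> nat \<Rightarrow> real" where
  "EE b J r m = real (digsum b (m + r)) - real (digsum b m) - (if ovf b J r m then 1 else 0)"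

definition S1 :: "nat \<Rightarrow> nat \<Rightarrow> nat \<Rightarrow> real" where
  "S1 b J r = (\<Sum>m<b^J. EE b J r m)"

definition TT :: "nat \<Rightarrow> nat \<Rightarrow> nat \<Rightarrow> real" where
  "TT b J r = (\<Sum>m<b^J. (EE b J r m)\<^sup>2 + real b * (if ovf b J r m then 1 else 0))"

definition cy :: "nat \<Rightarrow> nat \<Rightarrow> nat \<Rightarrow> nat" where
  "cy b m0 r0 = (if b \<le> m0 + r0 then 1 else 0)"

lemma le_mult_iff_aux:
  fixes b y X P :: nat
  assumes "0 < b" "y < b"
  shows "(b * P \<le> y + b * X) \<longleftrightarrow> P \<le> X"
proof
  assume h: "b * P \<le> y + b * X"
  show "P \<le> X"
  proof (rule ccontr)
    assume "\<not> P \<le> X"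
    hence "X + 1 \<le> P" by simp
    hence "b * (X + 1) \<le> b * P" by (rule mult_le_mono2)
    with h assms show False by (simp add: algebra_simps)
  qed
next
  assume "P \<le> X"
  hence "b * P \<le> b * X" by simp
  thus "b * P \<le> y + b * X" by linarith
qed

lemma carry_decomp:
  assumes b: "2 \<le> b" and "m0 < b" "r0 < b"
  shows "m0 + r0 = (m0 + r0 - b * cy b m0 r0) + b * cy b m0 r0"
    and "m0 + r0 - b * cy b m0 r0 < b"
  using assms by (auto simp: cy_def)

lemma ovf_step:
  assumes b: "2 \<le> b" and m0: "m0 < b" and r0: "r0 < b"
  shows "ovf b (Suc J) (r0 + b*r') (m0 + b*m') = ovf b J (r' + cy b m0 r0) m'"
proof -
  let ?c = "cy b m0 r0" let ?y = "m0 + r0 - b * ?c"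
  have e: "m0 + b*m' + (r0 + b*r') = ?y + b * (m' + (r' + ?c))"
    using carry_decomp(1)[OF assms] by (simp add: algebra_simps)
  show ?thesis unfolding ovf_def e
    using le_mult_iff_aux[of b ?y "b^J" "m' + (r' + ?c)"] carry_decomp(2)[OF assms] b
    by (simp add: mult.commute)
qed

lemma EE_step:
  assumes b: "2 \<le> b" and m0: "m0 < b" and r0: "r0 < b"
  shows "EE b (Suc J) (r0 + b*r') (m0 + b*m') =
    real r0 - real b * real (cy b m0 r0) + EE b J (r' + cy b m0 r0) m'"
proof -
  let ?c = "cy b m0 r0" let ?y = "m0 + r0 - b * ?c"
  have e: "m0 + b*m' + (r0 + b*r') = ?y + b * (m' + (r' + ?c))"
    using carry_decomp(1)[OF assms] by (simp add: algebra_simps)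
  have d1: "digsum b (m0 + b*m' + (r0 + b*r')) = ?y + digsum b (m' + (r' + ?c))"
    unfolding e using digsum_step[OF b carry_decomp(2)[OF assms]] .
  have d2: "digsum b (m0 + b*m') = m0 + digsum b m'" using digsum_step[OF b m0] .
  have yv: "real ?y = real m0 + real r0 - real b * real ?c"
    using carry_decomp(1)[OF assms] by (metis add_diff_cancel_right' of_nat_add of_nat_diff of_nat_mult le_add2)
  show ?thesis
    unfolding EE_def d1 d2 ovf_step[OF assms, symmetric]
    by (simp add: yv algebra_simps)
qed

lemma sum_split_pow:
  fixes f :: "nat \<Rightarrow> real"
  shows "(\<Sum>m<b^(Suc J). f m) = (\<Sum>m0<b. \<Sum>m'<b^J. f (m0 + b*m'))"
proof -
  have "(\<Sum>m<b^(Suc J). f m) = (\<Sum>m'<b^J. sum f {m'*b..<m'*b+b})"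
    using sum.nat_group[of f b "b^J"] by (simp add: power_Suc2 mult.commute)
  also have "\<dots> = (\<Sum>m'<b^J. \<Sum>m0<b. f (m0 + b*m'))"
  proof (rule sum.cong[OF refl])
    fix m' 
    have "sum f {m'*b..<m'*b+b} = sum f {0+m'*b..<b+m'*b}" by (simp add: add.commute)
    also have "\<dots> = (\<Sum>m0\<in>{0..<b}. f (m0 + m'*b))" by (rule sum.shift_bounds_nat_ivl)
    finally show "sum f {m'*b..<m'*b+b} = (\<Sum>m0<b. f (m0 + b*m'))"
      by (simp add: atLeast0LessThan mult.commute)
  qed
  also have "\<dots> = (\<Sum>m0<b. \<Sum>m'<b^J. f (m0 + b*m'))" by (rule sum.swap)
  finally show ?thesis .
qed

lemma sum_carry:
  fixes g :: "nat \<Rightarrow> real"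
  assumes "r0 \<le> b"
  shows "(\<Sum>m0<b. g (cy b m0 r0)) = (real b - real r0) * g 0 + real r0 * g 1"
proof -
  have U: "{..<b} = {..<b-r0} \<union> {b-r0..<b}" using assms by auto
  have "(\<Sum>m0<b. g (cy b m0 r0)) = (\<Sum>m0<b-r0. g (cy b m0 r0)) + (\<Sum>m0\<in>{b-r0..<b}. g (cy b m0 r0))"
    unfolding U by (subst sum.union_disjoint) auto
  also have "(\<Sum>m0<b-r0. g (cy b m0 r0)) = (\<Sum>m0<b-r0. g 0)"
    by (rule sum.cong) (auto simp: cy_def)
  also have "(\<Sum>m0\<in>{b-r0..<b}. g (cy b m0 r0)) = (\<Sum>m0\<in>{b-r0..<b}. g 1)"
    by (rule sum.cong) (auto simp: cy_def)
  finally show ?thesis using assms by (simp add: of_nat_diff)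
qed

lemma sum_EE_split:
  fixes \<Phi> :: "real \<Rightarrow> bool \<Rightarrow> real"
  assumes b: "2 \<le> b" and r0: "r0 < b"
  shows "(\<Sum>m<b^(Suc J). \<Phi> (EE b (Suc J) (r0 + b*r') m) (ovf b (Suc J) (r0 + b*r') m)) =
    (real b - real r0) * (\<Sum>m'<b^J. \<Phi> (real r0 + EE b J r' m') (ovf b J r' m'))
    + real r0 * (\<Sum>m'<b^J. \<Phi> (real r0 - real b + EE b J (r'+1) m') (ovf b J (r'+1) m'))"
proof -
  let ?G = "\<lambda>c. (\<Sum>m'<b^J. \<Phi> (real r0 - real b * real c + EE b J (r' + c) m') (ovf b J (r' + c) m'))"
  have "(\<Sum>m<b^(Suc J). \<Phi> (EE b (Suc J) (r0 + b*r') m) (ovf b (Suc J) (r0 + b*r') m)) =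
     (\<Sum>m0<b. \<Sum>m'<b^J. \<Phi> (EE b (Suc J) (r0 + b*r') (m0 + b*m')) (ovf b (Suc J) (r0 + b*r') (m0 + b*m')))"
    by (rule sum_split_pow)
  also have "\<dots> = (\<Sum>m0<b. ?G (cy b m0 r0))"
    by (intro sum.cong refl) (simp add: EE_step[OF b _ r0] ovf_step[OF b _ r0])
  also have "\<dots> = (real b - real r0) * ?G 0 + real r0 * ?G 1"
    using r0 by (intro sum_carry) simp
  finally show ?thesis by simp
qed

lemma S1_rec:
  assumes b: "2 \<le> b" and r0: "r0 < b"
  shows "S1 b (Suc J) (r0 + b*r') = (real b - real r0) * (real b ^ J * real r0 + S1 b J r')
    + real r0 * (real b ^ J * (real r0 - real b) + S1 b J (r'+1))"
  unfolding S1_def using sum_EE_split[OF b r0, of "\<lambda>x ov. x" J r']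
  by (simp add: sum.distrib)

lemma TT_rec_gen:
  assumes b: "2 \<le> b" and r0: "r0 < b"
  shows "TT b (Suc J) (r0 + b*r') = (real b - real r0) * (real b ^ J * (real r0)\<^sup>2 + 2 * real r0 * S1 b J r' + TT b J r')
    + real r0 * (real b ^ J * (real r0 - real b)\<^sup>2 + 2 * (real r0 - real b) * S1 b J (r'+1) + TT b J (r'+1))"
proof -
  have h: "\<And>a r. (\<Sum>m'<b^J. (a + EE b J r m')\<^sup>2 + real b * (if ovf b J r m' then 1 else 0))
      = real b ^ J * a\<^sup>2 + 2 * a * S1 b J r + TT b J r"
    by (simp add: S1_def TT_def power2_eq_square algebra_simps sum.distrib sum_distrib_left)
  show ?thesis
    unfolding TT_def[of b "Suc J"]
    using sum_EE_split[OF b r0, of "\<lambda>x ov. x\<^sup>2 + real b * (if ov then 1 else 0)" J r']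
    by (simp only: h diff_conv_add_uminus add.assoc[symmetric])
qed



lemma S1_base: assumes b: "2 \<le> b" and "r \<le> 1" shows "S1 b 0 r = 0"
proof -
  have "r = 0 \<or> r = 1" using assms by auto
  thus ?thesis using digsum_small[OF b, of 1] b by (auto simp: S1_def EE_def ovf_def)
qed

lemma TT_base0: "TT b 0 0 = 0" by (simp add: TT_def EE_def ovf_def)
lemma TT_base1: assumes b: "2 \<le> b" shows "TT b 0 1 = real b"
  using digsum_small[OF b, of 1] b by (simp add: TT_def EE_def ovf_def)

lemma r_split:
  fixes b r J :: nat
  assumes b: "2 \<le> b" and "r \<le> b ^ Suc J"
  shows "r div b \<le> b ^ J" and "0 < r mod b \<Longrightarrow> r div b + 1 \<le> b ^ J"
    and "r = r mod b + b * (r div b)"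
proof -
  have bp: "0 < b" using b by simp
  show e: "r = r mod b + b * (r div b)" by simp
  have "r div b \<le> (b * b ^ J) div b" using assms(2) by (intro div_le_mono) simp
  thus "r div b \<le> b ^ J" using bp by simp
  assume "0 < r mod b"
  show "r div b + 1 \<le> b ^ J"
  proof (rule ccontr)
    assume "\<not> ?thesis"
    hence "b ^ J \<le> r div b" by simp
    hence "b * b ^ J \<le> b * (r div b)" by simp
    moreover have "b ^ Suc J = b * b ^ J" by simp
    ultimately show False using e \<open>0 < r mod b\<close> assms(2) by linarith
  qed
qed

lemma S1_zero: assumes b: "2 \<le> b" shows "r \<le> b ^ J \<Longrightarrow> S1 b J r = 0"
proof (induction J arbitrary: r)
  case 0 then show ?case using S1_base[OF b] by simp
next
  case (Suc J)
  have bp: "0 < b" using b by simp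
  note rs = r_split[OF b Suc.prems]
  have r0: "r mod b < b" using bp by simp
  have A: "S1 b J (r div b) = 0" using Suc.IH rs(1) by simp
  have "S1 b (Suc J) r = S1 b (Suc J) (r mod b + b * (r div b))" using rs(3) by simp
  also have "\<dots> = (real b - real (r mod b)) * (real b ^ J * real (r mod b) + S1 b J (r div b))
    + real (r mod b) * (real b ^ J * (real (r mod b) - real b) + S1 b J (r div b + 1))"
    by (rule S1_rec[OF b r0])
  also have "\<dots> = 0"
  proof (cases "r mod b = 0")
    case True then show ?thesis using A by simp
  next
    case False
    hence "S1 b J (r div b + 1) = 0" using Suc.IH rs(2) by simp
    then show ?thesis using A by (simp add: algebra_simps)
  qed
  finally show ?case .
qed

lemma TT_rec:
  assumes b: "2 \<le> b" and r0: "r0 < b" and le: "r0 + b * r' \<le> b ^ Suc J"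
  shows "TT b (Suc J) (r0 + b*r') = (real b - real r0) * (real b ^ J * (real r0)\<^sup>2 + TT b J r')
    + real r0 * (real b ^ J * (real b - real r0)\<^sup>2 + TT b J (r'+1))"
proof -
  have bp: "0 < b" using b by simp
  have md: "(r0 + b*r') mod b = r0" "(r0 + b*r') div b = r'" using r0 bp by auto
  note rs = r_split[OF b le, unfolded md]
  have A: "S1 b J r' = 0" using S1_zero[OF b] rs(1) by simp
  have B: "real r0 * ((real r0 - real b) * S1 b J (r'+1)) = 0"
  proof (cases "r0 = 0")
    case False thus ?thesis using S1_zero[OF b] rs(2) by simp
  qed simp
  have sq: "(real r0 - real b)\<^sup>2 = (real b - real r0)\<^sup>2" by (simp add: power2_commute)
  show ?thesis unfolding TT_rec_gen[OF b r0] A sq using B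
    by (simp add: algebra_simps)
qed

lemma W_bound:
  fixes x T1 T2 P Q b r0 :: real
  assumes "0 \<le> x" "0 \<le> r0" "r0 \<le> b" "T1 \<le> x * P" "T2 \<le> x * Q"
  shows "(b - r0) * (x * r0\<^sup>2 + T1) + r0 * (x * (b - r0)\<^sup>2 + T2)
     \<le> x * (b * r0 * (b - r0) + (b - r0) * P + r0 * Q)"
proof -
  have e: "(b - r0) * (x * r0\<^sup>2 + T1) + r0 * (x * (b - r0)\<^sup>2 + T2)
     - x * (b * r0 * (b - r0) + (b - r0) * P + r0 * Q) = (b - r0) * (T1 - x * P) + r0 * (T2 - x * Q)"
    by (simp add: algebra_simps power2_eq_square)
  have "(b - r0) * (T1 - x * P) \<le> 0" using assms by (intro mult_nonneg_nonpos) auto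
  moreover have "r0 * (T2 - x * Q) \<le> 0" using assms by (intro mult_nonneg_nonpos) auto
  ultimately show ?thesis using e by linarith
qed

definition Pd :: "nat \<Rightarrow> nat \<Rightarrow> nat \<Rightarrow> bool" where
  "Pd b i r = (digit b i r \<noteq> 0 \<and> (digit b i r \<noteq> b - 1 \<or> digit b (Suc i) r \<noteq> b - 1))"

lemma digit_Suc: "digit b (Suc i) r = digit b i (r div b)"
  by (simp add: digit_def div_mult2_eq)

lemma Pd_Suc: "Pd b (Suc i) r = Pd b i (r div b)"
  by (simp add: Pd_def digit_Suc)

lemma Pd_bound: assumes b: "2 \<le> b" and "Pd b i r" shows "i \<le> r"
proof -
  have "digit b i r \<noteq> 0" using assms by (simp add: Pd_def)
  hence "\<not> r < b ^ i" using digit_zero_big[of r b i] by (metis)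
  moreover have "i < 2 ^ i" by (rule less_exp)
  moreover have "2 ^ i \<le> b ^ i" using b by (simp add: power_mono)
  ultimately show ?thesis by linarith
qed

lemma nz_alt: assumes b: "2 \<le> b" shows "nzblocks b r = card {i. Pd b i r}"
proof -
  have "{i. i \<le> r \<and> digit b i r \<noteq> 0 \<and> (digit b i r \<noteq> b - 1 \<or> digit b (Suc i) r \<noteq> b - 1)} = {i. Pd b i r}"
  proof (rule Collect_cong)
    fix i show "(i \<le> r \<and> digit b i r \<noteq> 0 \<and> (digit b i r \<noteq> b - 1 \<or> digit b (Suc i) r \<noteq> b - 1)) = Pd b i r"
      using Pd_bound[OF b, of i r] unfolding Pd_def by blast
  qed
  thus ?thesis by (simp add: nzblocks_def)
qed

lemma digit_0: "digit b 0 r = r mod b" by (simp add: digit_def)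

lemma nz_rec:
  assumes b: "2 \<le> b"
  shows "nzblocks b r = nzblocks b (r div b) +
    (if r mod b \<noteq> 0 \<and> (r mod b \<noteq> b - 1 \<or> (r div b) mod b \<noteq> b - 1) then 1 else 0)"
proof -
  let ?S = "{i. Pd b i (r div b)}"
  have sub: "?S \<subseteq> {..r div b}" using Pd_bound[OF b] by blast
  have fin: "finite ?S" by (rule finite_subset[OF sub finite_atMost])
  have P0: "Pd b 0 r = (r mod b \<noteq> 0 \<and> (r mod b \<noteq> b - 1 \<or> (r div b) mod b \<noteq> b - 1))"
    by (simp only: Pd_def digit_Suc digit_0)
  have eq: "{i. Pd b i r} = {i. i = 0 \<and> Pd b 0 r} \<union> Suc ` ?S"
  proof (intro set_eqI iffI)
    fix i assume "i \<in> {i. Pd b i r}"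
    hence h: "Pd b i r" by simp
    show "i \<in> {i. i = 0 \<and> Pd b 0 r} \<union> Suc ` ?S"
    proof (cases i)
      case 0 thus ?thesis using h by simp
    next
      case (Suc j)
      hence "Pd b j (r div b)" using h Pd_Suc by simp
      thus ?thesis using Suc by blast
    qed
  next
    fix i assume "i \<in> {i. i = 0 \<and> Pd b 0 r} \<union> Suc ` ?S"
    thus "i \<in> {i. Pd b i r}" using Pd_Suc by auto
  qed
  have cS: "card (Suc ` ?S) = card ?S" by (simp add: card_image)
  have n0: "0 \<notin> Suc ` ?S" by auto
  show ?thesis
  proof (cases "Pd b 0 r")
    case True
    hence "{i. Pd b i r} = insert 0 (Suc ` ?S)" using eq by auto
    hence "card {i. Pd b i r} = card ?S + 1" using fin n0 cS by simp
    thus ?thesis using True P0 nz_alt[OF b, of r] nz_alt[OF b, of "r div b"] by simp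
  next
    case False
    hence "{i. Pd b i r} = Suc ` ?S" using eq by auto
    hence "card {i. Pd b i r} = card ?S" using cS by simp
    thus ?thesis using False P0 nz_alt[OF b, of r] nz_alt[OF b, of "r div b"] by simp
  qed
qed



definition Lm :: "nat \<Rightarrow> nat \<Rightarrow> real" where "Lm b r = real (nzblocks b r)"

lemma nz_zero: "nzblocks b 0 = 0" by (simp add: nzblocks_def digit_def)

lemma fin_mult:
  fixes x T W B G :: real
  assumes "0 \<le> x" "T \<le> x * W" "W \<le> B * G"
  shows "T \<le> (B * x) * G"
proof -
  have "x * W \<le> x * (B * G)" using assms by (intro mult_left_mono) auto
  thus ?thesis using assms(2) by (simp add: algebra_simps)
qed

lemma invariant:
  assumes b: "2 \<le> b"
  shows "r < b ^ J \<Longrightarrow> TT b J r \<le> real b ^ J * (real b ^ 2 * Lm b r)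
        \<and> TT b J (r+1) \<le> real b ^ J * (real b ^ 2 * Lm b r + real b)
        \<and> (r mod b = b - 1 \<longrightarrow> TT b J r \<le> real b ^ J * (real b ^ 2 * Lm b r - real b * (real b - 2))
                            \<and> TT b J (r+1) \<le> real b ^ J * (real b ^ 2 * Lm b r - real b * (real b - 1)))"
proof (induction J arbitrary: r)
  case 0
  hence r: "r = 0" by simp
  have "0 mod b \<noteq> b - 1" using b by simp
  then show ?case using r TT_base0 TT_base1[OF b] by (simp add: Lm_def nz_zero)
next
  case (Suc J)
  define B where "B = real b"
  define x where "x = real b ^ J"
  define A where "A = B ^ 2"
  define r0 where "r0 = r mod b"
  define r' where "r' = r div b"
  have bp: "0 < b" using b by simp
  have B2: "2 \<le> B" using b by (simp add: B_def)
  have x0: "0 \<le> x" by (simp add: x_def)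
  have xs: "real b ^ Suc J = B * x" by (simp add: B_def x_def)
  have rr: "r = r0 + b * r'" by (simp add: r0_def r'_def)
  have r0lt: "r0 < b" using bp by (simp add: r0_def)
  have r'lt: "r' < b ^ J" using Suc.prems bp by (simp add: r'_def div_less_iff_less_mult mult.commute)
  have rle: "r0 + b * r' \<le> b ^ Suc J" using Suc.prems rr by simp
  have r1le: "r0 + b * r' + 1 \<le> b ^ Suc J" using Suc.prems rr by simp
  define T1 where "T1 = TT b J r'"
  define T2 where "T2 = TT b J (r'+1)"
  define L' where "L' = Lm b r'"
  have IH: "T1 \<le> x * (A * L')" "T2 \<le> x * (A * L' + B)"
      "r' mod b = b - 1 \<Longrightarrow> T1 \<le> x * (A * L' - B * (B - 2)) \<and> T2 \<le> x * (A * L' - B * (B - 1))"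
    using Suc.IH[OF r'lt] by (simp_all add: T1_def T2_def L'_def x_def A_def B_def)
  have Lr: "Lm b r = L' + (if r0 \<noteq> 0 \<and> (r0 \<noteq> b - 1 \<or> r' mod b \<noteq> b - 1) then 1 else 0)"
    using nz_rec[OF b, of r] by (simp add: Lm_def L'_def r0_def r'_def)
  have TTr: "TT b (Suc J) r = (B - real r0) * (x * (real r0)\<^sup>2 + T1) + real r0 * (x * (B - real r0)\<^sup>2 + T2)"
    using TT_rec[OF b r0lt rle] rr by (simp add: B_def x_def T1_def T2_def)
  have L0: "0 \<le> L'" by (simp add: L'_def Lm_def)
  show ?case
  proof (cases "r0 = 0")
    case True
    have L: "Lm b r = L'" using Lr True by simp
    have t1: "TT b (Suc J) r \<le> (B * x) * (A * Lm b r)"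
    proof -
      have "B * T1 \<le> B * (x * (A * L'))" using IH(1) B2 by (intro mult_left_mono) auto
      thus ?thesis using TTr True L by (simp add: algebra_simps)
    qed
    have r1: "r + 1 = 1 + b * r'" using rr True by simp
    have "TT b (Suc J) (r+1) = (B - 1) * (x * 1\<^sup>2 + T1) + 1 * (x * (B - 1)\<^sup>2 + T2)"
      using TT_rec[OF b _, of 1 r' J] b r1 r1le True by (simp add: B_def x_def T1_def T2_def)
    also have "\<dots> \<le> x * (B * 1 * (B - 1) + (B - 1) * (A * L') + 1 * (A * L' + B))"
      using B2 x0 IH by (intro W_bound) auto
    finally have h: "TT b (Suc J) (r+1) \<le> x * (B * 1 * (B - 1) + (B - 1) * (A * L') + 1 * (A * L' + B))" .
    have w: "B * 1 * (B - 1) + (B - 1) * (A * L') + 1 * (A * L' + B) \<le> B * (A * Lm b r + B)"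
      by (simp add: L A_def algebra_simps power2_eq_square)
    have "TT b (Suc J) (r+1) \<le> (B * x) * (A * Lm b r + B)" by (rule fin_mult[OF x0 h w])
    moreover have "r mod b \<noteq> b - 1" using True b by (simp add: r0_def)
    ultimately show ?thesis using t1 xs by (simp add: A_def B_def x_def)
  next
    case nz: False
    show ?thesis
    proof (cases "r0 = b - 1")
      case False
      hence L: "Lm b r = L' + 1" using Lr nz by simp
      have r0B: "real r0 \<le> B - 2" "1 \<le> real r0" using False nz r0lt by (auto simp: B_def)
      have h: "TT b (Suc J) r \<le> x * (B * real r0 * (B - real r0) + (B - real r0) * (A * L') + real r0 * (A * L' + B))"
        unfolding TTr using r0B B2 x0 IH by (intro W_bound) auto
      have e: "B * real r0 * (B - real r0) + (B - real r0) * (A * L') + real r0 * (A * L' + B)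
          = B * (A * L' + real r0 * (B - real r0 + 1))"
        by (simp add: algebra_simps)
      have m: "real r0 * (B - real r0 + 1) \<le> B * B"
        using r0B by (intro mult_mono) auto
      have "B * (A * L' + real r0 * (B - real r0 + 1)) \<le> B * (A * Lm b r)"
        using m B2 by (intro mult_left_mono) (auto simp: L A_def algebra_simps power2_eq_square)
      hence t1: "TT b (Suc J) r \<le> (B * x) * (A * Lm b r)"
        using fin_mult[OF x0 h] e by simp
      have r1: "r + 1 = (r0 + 1) + b * r'" using rr by simp
      have r01: "r0 + 1 < b" using False r0lt by simp
      have "TT b (Suc J) (r+1) = (B - (real r0 + 1)) * (x * (real r0 + 1)\<^sup>2 + T1) + (real r0 + 1) * (x * (B - (real r0 + 1))\<^sup>2 + T2)"
        using TT_rec[OF b r01, of r' J] r1 r1le by (simp add: B_def x_def T1_def T2_def add.commute)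
      also have "\<dots> \<le> x * (B * (real r0 + 1) * (B - (real r0 + 1)) + (B - (real r0 + 1)) * (A * L') + (real r0 + 1) * (A * L' + B))"
        using r0B B2 x0 IH by (intro W_bound) auto
      finally have h: "TT b (Suc J) (r+1) \<le> \<dots>" .
      have e2: "B * (real r0 + 1) * (B - (real r0 + 1)) + (B - (real r0 + 1)) * (A * L') + (real r0 + 1) * (A * L' + B)
          = B * (A * L' + (real r0 + 1) * (B - real r0))"
        by (simp add: algebra_simps)
      have m: "(real r0 + 1) * (B - real r0) \<le> B * B"
        using r0B by (intro mult_mono) auto
      have "B * (A * L' + (real r0 + 1) * (B - real r0)) \<le> B * (A * Lm b r + B)"
        using m B2 by (intro mult_left_mono) (auto simp: L A_def algebra_simps power2_eq_square)
      hence t2: "TT b (Suc J) (r+1) \<le> (B * x) * (A * Lm b r + B)"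
        using fin_mult[OF x0 h] e2 by simp
      have "r mod b \<noteq> b - 1" using False by (simp add: r0_def)
      thus ?thesis using t1 t2 xs by (simp add: A_def B_def x_def)
    next
      case tb: True
      have rB: "real r0 = B - 1" using tb b by (simp add: B_def of_nat_diff)
      have r1: "r + 1 = 0 + b * (r' + 1)" using rr tb b by simp
      have TT1: "TT b (Suc J) (r+1) = B * T2"
      proof -
        have "0 + b * (r' + 1) \<le> b ^ Suc J" using Suc.prems r1 by linarith
        thus ?thesis using TT_rec[OF b bp, of "r'+1" J] r1 by (simp add: B_def x_def T2_def)
      qed
      have rm: "r mod b = b - 1" using tb by (simp add: r0_def)
      show ?thesis
      proof (cases "r' mod b = b - 1")
        case True
        have L: "Lm b r = L'" using Lr tb True by simp
        note I3 = IH(3)[OF True]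
        have h: "TT b (Suc J) r \<le> x * (B * real r0 * (B - real r0) + (B - real r0) * (A * L' - B * (B - 2)) + real r0 * (A * L' - B * (B - 1)))"
          unfolding TTr using rB B2 x0 I3 by (intro W_bound) auto
        have e: "B * real r0 * (B - real r0) + (B - real r0) * (A * L' - B * (B - 2)) + real r0 * (A * L' - B * (B - 1))
           = B * (A * L' - B * (B - 2))"
          unfolding rB A_def by (simp add: algebra_simps power2_eq_square)
        have t3: "TT b (Suc J) r \<le> (B * x) * (A * Lm b r - B * (B - 2))"
          using fin_mult[OF x0 h] e L by simp
        have t4: "TT b (Suc J) (r+1) \<le> (B * x) * (A * Lm b r - B * (B - 1))"
        proof -
          have "B * T2 \<le> B * (x * (A * L' - B * (B - 1)))" using I3 B2 by (intro mult_left_mono) auto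
          thus ?thesis using TT1 L by (simp add: algebra_simps)
        qed
        have "0 \<le> B * x * (B * (B - 2))" using B2 x0 by simp
        hence t1: "TT b (Suc J) r \<le> (B * x) * (A * Lm b r)" using t3 by (simp add: algebra_simps)
        have "0 \<le> B * x * (B * (B - 1) + B)" using B2 x0 by simp
        hence t2: "TT b (Suc J) (r+1) \<le> (B * x) * (A * Lm b r + B)" using t4 by (simp add: algebra_simps)
        show ?thesis using t1 t2 t3 t4 xs by (simp add: A_def B_def x_def)
      next
        case False
        have L: "Lm b r = L' + 1" using Lr tb False nz by simp
        have h: "TT b (Suc J) r \<le> x * (B * real r0 * (B - real r0) + (B - real r0) * (A * L') + real r0 * (A * L' + B))"
          unfolding TTr using rB B2 x0 IH by (intro W_bound) auto
        have e: "B * real r0 * (B - real r0) + (B - real r0) * (A * L') + real r0 * (A * L' + B)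
           = B * (A * L' + 2 * (B - 1))"
          unfolding rB A_def by (simp add: algebra_simps power2_eq_square)
        have w: "B * (A * L' + 2 * (B - 1)) \<le> B * (A * Lm b r - B * (B - 2))"
          using B2 L by (intro mult_left_mono) (auto simp: A_def algebra_simps power2_eq_square)
        have t3: "TT b (Suc J) r \<le> (B * x) * (A * Lm b r - B * (B - 2))"
          using fin_mult[OF x0 h] e w by simp
        have t4: "TT b (Suc J) (r+1) \<le> (B * x) * (A * Lm b r - B * (B - 1))"
        proof -
          have "B * T2 \<le> B * (x * (A * L' + B))" using IH(2) B2 by (intro mult_left_mono) auto
          thus ?thesis using TT1 L by (simp add: A_def algebra_simps power2_eq_square)
        qed
        have "0 \<le> B * x * (B * (B - 2))" using B2 x0 by simp
        hence t1: "TT b (Suc J) r \<le> (B * x) * (A * Lm b r)" using t3 by (simp add: algebra_simps)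
        have "0 \<le> B * x * (B * (B - 1) + B)" using B2 x0 by simp
        hence t2: "TT b (Suc J) (r+1) \<le> (B * x) * (A * Lm b r + B)" using t4 by (simp add: algebra_simps)
        show ?thesis using t1 t2 t3 t4 xs by (simp add: A_def B_def x_def)
      qed
    qed
  qed
qed



lemma card_sum: fixes N :: nat shows "real (card {n. n < N \<and> P n}) = (\<Sum>n<N. if P n then 1 else (0::real))"
proof -
  have "{n. n < N \<and> P n} = {x\<in>{..<N}. P x}" by auto
  hence "real (card {n. n < N \<and> P n}) = (\<Sum>n\<in>{x\<in>{..<N}. P x}. (1::real))" by simp
  also have "\<dots> = (\<Sum>n<N. if P n then 1 else (0::real))" by (rule sum.inter_filter) simp
  finally show ?thesis .
qed

lemma Delta_le: assumes "2 \<le> b" shows "real_of_int (Delta b r n) \<le> real (digsum b r)"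
  using digsum_subadd[OF assms, of n r] by (simp add: Delta_def)

lemma sumsq_bound:
  assumes b: "2 \<le> b" and r: "r \<le> b ^ J"
  shows "(\<Sum>n<b^J. (real_of_int (Delta b r n))\<^sup>2) \<le> TT b J r + 2 * real (digsum b r) * real r"
proof -
  define o' where "o' = (\<lambda>n. if ovf b J r n then 1 else (0::real))"
  define s where "s = real (digsum b r)"
  have pt: "(real_of_int (Delta b r n))\<^sup>2 \<le> ((EE b J r n)\<^sup>2 + real b * o' n) + 2 * s * o' n" for n
  proof -
    have D: "real_of_int (Delta b r n) = EE b J r n + o' n" by (simp add: Delta_def EE_def o'_def)
    show ?thesis
    proof (cases "ovf b J r n")
      case False thus ?thesis using D by (simp add: o'_def)
    next
      case True
      have "real_of_int (Delta b r n) \<le> s" unfolding s_def by (rule Delta_le[OF b])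
      hence h: "2 * EE b J r n + 1 \<le> real b + 2 * s" using D True b by (simp add: o'_def)
      have "(EE b J r n + 1)\<^sup>2 = (EE b J r n)\<^sup>2 + 2 * EE b J r n + 1"
        by (simp add: power2_eq_square algebra_simps)
      thus ?thesis using D True h by (simp add: o'_def)
    qed
  qed
  have "(\<Sum>n<b^J. (real_of_int (Delta b r n))\<^sup>2) \<le> (\<Sum>n<b^J. ((EE b J r n)\<^sup>2 + real b * o' n) + 2 * s * o' n)"
    by (rule sum_mono) (rule pt)
  also have "\<dots> = TT b J r + 2 * s * (\<Sum>n<b^J. o' n)"
    by (simp add: TT_def sum.distrib sum_distrib_left o'_def)
  also have "(\<Sum>n<b^J. o' n) = real (card {n. n < b^J \<and> ovf b J r n})"
    by (simp add: card_sum o'_def)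
  also have "card {n. n < b^J \<and> ovf b J r n} \<le> r"
  proof -
    have "{n. n < b^J \<and> ovf b J r n} \<subseteq> {b^J - r..<b^J}" by (auto simp: ovf_def)
    hence "card {n. n < b^J \<and> ovf b J r n} \<le> card {b^J - r..<b^J}" by (intro card_mono) auto
    thus ?thesis using r by simp
  qed
  hence "2 * s * real (card {n. n < b^J \<and> ovf b J r n}) \<le> 2 * s * real r"
    by (intro mult_left_mono) (auto simp: s_def)
  finally show ?thesis by (simp add: s_def)
qed

lemma periodic_count_full:
  fixes p :: nat and Q :: "nat \<Rightarrow> bool"
  shows "card {n. n < q * p \<and> Q (n mod p)} = q * card {x. x < p \<and> Q x}"
proof (induction q)
  case 0 then show ?case by simp
next
  case (Suc q)
  have U: "{n. n < Suc q * p \<and> Q (n mod p)} = {n. n < q * p \<and> Q (n mod p)} \<union> (\<lambda>x. q * p + x) ` {x. x < p \<and> Q x}"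
  proof (intro set_eqI iffI)
    fix n assume "n \<in> {n. n < Suc q * p \<and> Q (n mod p)}"
    hence n: "n < q * p + p" "Q (n mod p)" by auto
    show "n \<in> {n. n < q * p \<and> Q (n mod p)} \<union> (\<lambda>x. q * p + x) ` {x. x < p \<and> Q x}"
    proof (cases "n < q * p")
      case True thus ?thesis using n by simp
    next
      case False
      hence "n = q * p + (n - q * p)" "n - q * p < p" using n by auto
      moreover have "(q * p + (n - q * p)) mod p = n - q * p" using \<open>n - q * p < p\<close> by simp
      ultimately show ?thesis using n by (metis (mono_tags, lifting) UnI2 image_eqI mem_Collect_eq)
    qed
  next
    fix n assume "n \<in> {n. n < q * p \<and> Q (n mod p)} \<union> (\<lambda>x. q * p + x) ` {x. x < p \<and> Q x}"
    thus "n \<in> {n. n < Suc q * p \<and> Q (n mod p)}" by auto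
  qed
  have disj: "{n. n < q * p \<and> Q (n mod p)} \<inter> (\<lambda>x. q * p + x) ` {x. x < p \<and> Q x} = {}" by auto
  have "card {n. n < Suc q * p \<and> Q (n mod p)} = card {n. n < q * p \<and> Q (n mod p)} + card ((\<lambda>x. q * p + x) ` {x. x < p \<and> Q x})"
    unfolding U by (rule card_Un_disjoint) (use disj in auto)
  also have "card ((\<lambda>x. q * p + x) ` {x. x < p \<and> Q x}) = card {x. x < p \<and> Q x}"
    by (rule card_image) (simp add: inj_on_def)
  finally show ?case using Suc.IH by simp
qed

lemma periodic_count:
  fixes p N :: nat and Q :: "nat \<Rightarrow> bool"
  assumes p: "0 < p"
  shows "(N div p) * card {x. x < p \<and> Q x} \<le> card {n. n < N \<and> Q (n mod p)}"
    and "card {n. n < N \<and> Q (n mod p)} \<le> (N div p) * card {x. x < p \<and> Q x} + p"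
proof -
  let ?q = "N div p"
  have le: "?q * p \<le> N" by (metis div_mult_mod_eq le_add1)
  have s1: "{n. n < ?q * p \<and> Q (n mod p)} \<subseteq> {n. n < N \<and> Q (n mod p)}" using less_le_trans[OF _ le] by blast
  show "?q * card {x. x < p \<and> Q x} \<le> card {n. n < N \<and> Q (n mod p)}"
    unfolding periodic_count_full[symmetric] by (rule card_mono[OF _ s1]) auto
  have s2: "{n. n < N \<and> Q (n mod p)} \<subseteq> {n. n < ?q * p \<and> Q (n mod p)} \<union> {?q * p..<N}" by auto
  have "card {n. n < N \<and> Q (n mod p)} \<le> card ({n. n < ?q * p \<and> Q (n mod p)} \<union> {?q * p..<N})"
    by (rule card_mono[OF _ s2]) auto
  also have "\<dots> \<le> card {n. n < ?q * p \<and> Q (n mod p)} + card {?q * p..<N}" by (rule card_Un_le)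
  also have "card {?q * p..<N} = N - ?q * p" by simp
  also have "N - ?q * p < p" using p by (metis minus_div_mult_eq_mod mod_less_divisor)
  finally show "card {n. n < N \<and> Q (n mod p)} \<le> ?q * card {x. x < p \<and> Q x} + p"
    unfolding periodic_count_full by simp
qed

lemma periodic_lim:
  fixes p :: nat and Q :: "nat \<Rightarrow> bool"
  assumes p: "0 < p"
  shows "(\<lambda>N. real (card {n. n < N \<and> Q (n mod p)}) / real N) \<longlonglongrightarrow> real (card {x. x < p \<and> Q x}) / real p"
proof -
  define c where "c = card {x. x < p \<and> Q x}"
  have cp: "c \<le> p" unfolding c_def
    by (rule order.trans[OF card_mono[of "{..<p}"]]) auto
  have bound: "norm (real (card {n. n < N \<and> Q (n mod p)}) / real N - real c / real p) \<le> real p / real N"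
    if N: "0 < N" for N
  proof -
    define f where "f = real (card {n. n < N \<and> Q (n mod p)})"
    define q where "q = real (N div p)"
    define t where "t = real (N mod p)"
    have h1: "q * real c \<le> f" "f \<le> q * real c + real p"
      using periodic_count[OF p, of N Q] unfolding f_def q_def c_def
      by (metis of_nat_le_iff of_nat_mult of_nat_add)+
    have h3: "real N = q * real p + t" unfolding q_def t_def
      by (metis of_nat_add of_nat_mult div_mult_mod_eq)
    have t0: "0 \<le> t" "t \<le> real p" using p by (auto simp: t_def less_imp_le)
    have c0: "0 \<le> real c" "real c \<le> real p" using cp by auto
    have pp: "0 < real p" using p by simp
    have NN: "0 < real N" using N by simp
    have e: "f / real N - real c / real p = (f * real p - real c * real N) / (real p * real N)"
      using pp NN by (simp add: field_simps)
    have m1: "q * real c * real p \<le> f * real p" using h1 pp by (intro mult_right_mono) auto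
    have m2: "f * real p \<le> (q * real c + real p) * real p" using h1 pp by (intro mult_right_mono) auto
    have m3: "real c * t \<le> real p * real p" using c0 t0 by (intro mult_mono) auto
    have m4: "0 \<le> real c * t" using c0 t0 by simp
    have "f * real p - real c * real N = f * real p - q * real c * real p - real c * t"
      unfolding h3 by (simp add: algebra_simps)
    hence "\<bar>f * real p - real c * real N\<bar> \<le> real p * real p"
      using m1 m2 m3 m4 by (simp add: algebra_simps abs_le_iff)
    hence "\<bar>f * real p - real c * real N\<bar> / (real p * real N) \<le> real p * real p / (real p * real N)"
      using pp NN by (intro divide_right_mono) auto
    thus ?thesis unfolding f_def[symmetric] using e pp NN by (simp add: abs_divide)
  qed
  have "(\<lambda>N. real (card {n. n < N \<and> Q (n mod p)}) / real N - real c / real p) \<longlonglongrightarrow> 0"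
  proof (rule Lim_null_comparison)
    show "\<forall>\<^sub>F N in sequentially. norm (real (card {n. n < N \<and> Q (n mod p)}) / real N - real c / real p) \<le> real p / real N"
      using bound by (intro eventually_sequentiallyI[of 1]) auto
    show "(\<lambda>N. real p / real N) \<longlonglongrightarrow> 0" by (rule lim_const_over_n)
  qed
  thus ?thesis unfolding c_def by (simp add: LIM_zero_iff)
qed



lemma Delta_local:
  assumes b: "2 \<le> b" and x: "n mod b ^ K + r < b ^ K"
  shows "Delta b r n = int (digsum b (n mod b ^ K + r)) - int (digsum b (n mod b ^ K))"
proof -
  have p0: "0 < b ^ K" using b by simp
  have e1: "n = (n div b ^ K) * b ^ K + n mod b ^ K" by (rule div_mult_mod_eq[symmetric])
  have e2: "n + r = (n div b ^ K) * b ^ K + (n mod b ^ K + r)" by (metis add.assoc div_mult_mod_eq)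
  have d1: "digsum b (n + r) = digsum b (n div b ^ K) + digsum b (n mod b ^ K + r)"
    unfolding e2 using digsum_shift[OF b, where x = "n mod b ^ K + r" and K = K and q = "n div b ^ K"] x by simp
  have d2: "digsum b n = digsum b (n div b ^ K) + digsum b (n mod b ^ K)"
    using digsum_shift[OF b, where x = "n mod b ^ K" and K = K and q = "n div b ^ K"] p0 e1 by simp
  show ?thesis unfolding Delta_def d1 d2 by simp
qed

lemma mu_conv:
  assumes b: "2 \<le> b"
  shows "(\<lambda>N. real (card {n. n < N \<and> Delta b r n = d}) / real N) \<longlonglongrightarrow> mu b r d"
proof -
  define a where "a = (\<lambda>N. real (card {n. n < N \<and> Delta b r n = d}) / real N)"
  have "Cauchy a"
  proof (rule CauchyI)
    fix e :: real assume e: "0 < e"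
    obtain K where K: "4 * real r / e < real b ^ K"
      using real_arch_pow[of "real b" "4 * real r / e"] b by auto
    define p where "p = b ^ K"
    have p0: "0 < p" using b by (simp add: p_def)
    define Qb where "Qb = (\<lambda>x. x + r < p \<and> int (digsum b (x + r)) - int (digsum b x) = d)"
    define Qp where "Qp = (\<lambda>x. p \<le> x + r)"
    define cb where "cb = card {x. x < p \<and> Qb x}"
    define cp where "cp = card {x. x < p \<and> Qp x}"
    define \<beta> where "\<beta> = (\<lambda>N. real (card {n. n < N \<and> Qb (n mod p)}) / real N)"
    define \<pi> where "\<pi> = (\<lambda>N. real (card {n. n < N \<and> Qp (n mod p)}) / real N)"
    have bl: "\<beta> \<longlonglongrightarrow> real cb / real p" unfolding \<beta>_def cb_def by (rule periodic_lim[OF p0])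
    have pl: "\<pi> \<longlonglongrightarrow> real cp / real p" unfolding \<pi>_def cp_def by (rule periodic_lim[OF p0])
    have cpr: "real cp / real p < e / 4"
    proof -
      have "{x. x < p \<and> Qp x} \<subseteq> {p - r..<p}" by (auto simp: Qp_def)
      hence "cp \<le> card {p - r..<p}" unfolding cp_def by (intro card_mono) auto
      hence cpr: "real cp \<le> real r" by simp
      have pp: "0 < real p" using p0 by simp
      have "4 * real r < e * real p" using K e by (simp add: p_def divide_less_eq mult.commute)
      hence "real r / real p < e / 4" using pp by (simp add: divide_less_eq field_simps)
      moreover have "real cp / real p \<le> real r / real p" using cpr pp by (intro divide_right_mono) auto
      ultimately show ?thesis by linarith
    qed
    have sand: "\<beta> N \<le> a N \<and> a N \<le> \<beta> N + \<pi> N" for N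
    proof -
      have s1: "{n. n < N \<and> Qb (n mod p)} \<subseteq> {n. n < N \<and> Delta b r n = d}"
        using Delta_local[OF b] by (auto simp: Qb_def p_def)
      have s2: "{n. n < N \<and> Delta b r n = d} \<subseteq> {n. n < N \<and> Qb (n mod p)} \<union> {n. n < N \<and> Qp (n mod p)}"
      proof
        fix n assume n: "n \<in> {n. n < N \<and> Delta b r n = d}"
        show "n \<in> {n. n < N \<and> Qb (n mod p)} \<union> {n. n < N \<and> Qp (n mod p)}"
        proof (cases "n mod p + r < p")
          case True thus ?thesis using n Delta_local[OF b, of n K r] by (auto simp: Qb_def p_def)
        next
          case False thus ?thesis using n by (auto simp: Qp_def)
        qed
      qed
      have c1: "card {n. n < N \<and> Qb (n mod p)} \<le> card {n. n < N \<and> Delta b r n = d}"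
        by (rule card_mono[OF _ s1]) auto
      have "card {n. n < N \<and> Delta b r n = d} \<le> card ({n. n < N \<and> Qb (n mod p)} \<union> {n. n < N \<and> Qp (n mod p)})"
        by (rule card_mono[OF _ s2]) auto
      also have "\<dots> \<le> card {n. n < N \<and> Qb (n mod p)} + card {n. n < N \<and> Qp (n mod p)}" by (rule card_Un_le)
      finally have c2: "real (card {n. n < N \<and> Delta b r n = d}) \<le> real (card {n. n < N \<and> Qb (n mod p)}) + real (card {n. n < N \<and> Qp (n mod p)})"
        by linarith
      have "\<beta> N \<le> a N" unfolding \<beta>_def a_def using c1 by (intro divide_right_mono) auto
      moreover have "a N \<le> \<beta> N + \<pi> N" unfolding \<beta>_def a_def \<pi>_def add_divide_distrib[symmetric]
        using c2 by (intro divide_right_mono) auto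
      ultimately show ?thesis by simp
    qed
    obtain M1 where M1: "\<forall>N\<ge>M1. norm (\<beta> N - real cb / real p) < e / 4"
      using LIMSEQ_D[OF bl, of "e/4"] e by auto
    obtain M2 where M2: "\<forall>N\<ge>M2. norm (\<pi> N - real cp / real p) < e / 4"
      using LIMSEQ_D[OF pl, of "e/4"] e by auto
    have bnd: "real cb / real p - e / 4 < a N \<and> a N < real cb / real p + 3 * e / 4" if "N \<ge> max M1 M2" for N
    proof -
      have "\<bar>\<beta> N - real cb / real p\<bar> < e / 4" "\<bar>\<pi> N - real cp / real p\<bar> < e / 4"
        using M1 M2 that by auto
      hence "\<beta> N - real cb / real p < e / 4" "- (e / 4) < \<beta> N - real cb / real p"
        "\<pi> N - real cp / real p < e / 4" by (simp_all only: abs_less_iff) linarith+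
      thus ?thesis using sand[of N] cpr by linarith
    qed
    show "\<exists>M. \<forall>m\<ge>M. \<forall>n\<ge>M. norm (a m - a n) < e"
    proof (intro exI allI impI)
      fix m n assume "max M1 M2 \<le> m" "max M1 M2 \<le> n"
      from bnd[OF this(1)] bnd[OF this(2)] show "norm (a m - a n) < e" by (simp add: abs_less_iff)
    qed
  qed
  hence "convergent a" by (simp add: Cauchy_convergent_iff)
  hence "a \<longlonglongrightarrow> lim a" by (simp add: convergent_LIMSEQ_iff)
  thus ?thesis by (simp add: a_def mu_def)
qed



lemma fin_sum:
  fixes D :: "int set" and f :: "int \<Rightarrow> real"
  assumes D: "finite D"
  shows "(\<Sum>d\<in>D. f d * (real (card {n. n < N \<and> Delta b r n = d}) / real N))
       = (\<Sum>n<N. if Delta b r n \<in> D then f (Delta b r n) else 0) / real N"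
proof -
  have "(\<Sum>d\<in>D. f d * (real (card {n. n < N \<and> Delta b r n = d}) / real N))
      = (\<Sum>d\<in>D. \<Sum>n<N. if Delta b r n = d then f d else 0) / real N"
  proof -
    have pw: "f d * real (card {n. n < N \<and> Delta b r n = d}) = (\<Sum>n<N. if Delta b r n = d then f d else 0)" for d
      unfolding card_sum sum_distrib_left by (rule sum.cong) auto
    show ?thesis by (simp only: times_divide_eq_right pw sum_divide_distrib)
  qed
  also have "(\<Sum>d\<in>D. \<Sum>n<N. if Delta b r n = d then f d else 0) = (\<Sum>n<N. \<Sum>d\<in>D. if Delta b r n = d then f d else 0)"
    by (rule sum.swap)
  also have "\<dots> = (\<Sum>n<N. if Delta b r n \<in> D then f (Delta b r n) else 0)"
    using D by simp
  finally show ?thesis .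
qed

lemma pow_big: assumes b: "2 \<le> b" shows "r < b ^ r"
proof -
  have "r < 2 ^ r" by (rule less_exp)
  also have "2 ^ r \<le> b ^ r" using b by (simp add: power_mono)
  finally show ?thesis .
qed

lemma pow_big': assumes b: "2 \<le> b" and "r \<le> J" shows "r < b ^ J"
proof -
  have "b ^ r \<le> b ^ J" using assms by (intro power_increasing) auto
  thus ?thesis using pow_big[OF b, of r] by linarith
qed

lemma sq_avg_bound:
  assumes b: "2 \<le> b" and rJ: "r < b ^ J"
  shows "(\<Sum>n<b^J. (real_of_int (Delta b r n))\<^sup>2) / real b ^ J
     \<le> real (b ^ 2) * real (nzblocks b r) + 2 * real (digsum b r) * real r / real b ^ J"
proof -
  have x0: "0 < real b ^ J" using b by simp
  have "(\<Sum>n<b^J. (real_of_int (Delta b r n))\<^sup>2) \<le> TT b J r + 2 * real (digsum b r) * real r"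
    using sumsq_bound[OF b] rJ by simp
  also have "TT b J r \<le> real b ^ J * (real b ^ 2 * Lm b r)"
    using invariant[OF b rJ] by simp
  finally have "(\<Sum>n<b^J. (real_of_int (Delta b r n))\<^sup>2) / real b ^ J
      \<le> (real b ^ J * (real b ^ 2 * Lm b r) + 2 * real (digsum b r) * real r) / real b ^ J"
    using x0 by (intro divide_right_mono) auto
  also have "\<dots> = real (b ^ 2) * real (nzblocks b r) + 2 * real (digsum b r) * real r / real b ^ J"
    using x0 by (simp add: Lm_def add_divide_distrib)
  finally show ?thesis .
qed

lemma sub_lim:
  assumes b: "2 \<le> b"
  shows "(\<lambda>J. real (card {n. n < b ^ J \<and> Delta b r n = d}) / real (b ^ J)) \<longlonglongrightarrow> mu b r d"
proof -
  have sm: "strict_mono (\<lambda>J. b ^ J)" unfolding strict_mono_def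
    using b by (auto intro: power_strict_increasing)
  from LIMSEQ_subseq_LIMSEQ[OF mu_conv[OF b] sm] show ?thesis by (simp add: o_def)
qed

lemma err_lim:
  assumes b: "2 \<le> b"
  shows "(\<lambda>J. c / real b ^ J) \<longlonglongrightarrow> (0::real)"
proof -
  have "(\<lambda>J. c * inverse (real b ^ J)) \<longlonglongrightarrow> c * 0"
    using b by (intro tendsto_mult tendsto_const LIMSEQ_inverse_realpow_zero) auto
  thus ?thesis by (simp add: divide_inverse)
qed

lemma mu_nonneg: assumes b: "2 \<le> b" shows "0 \<le> mu b r d"
  by (rule LIMSEQ_le_const[OF mu_conv[OF b]]) auto

lemma second_moment_fin:
  assumes b: "2 \<le> b" and D: "finite D"
  shows "(\<Sum>d\<in>D. (real_of_int d)\<^sup>2 * mu b r d) \<le> real (b ^ 2) * real (nzblocks b r)"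
proof -
  define C where "C = real (b ^ 2) * real (nzblocks b r)"
  define s where "s = 2 * real (digsum b r) * real r"
  let ?g = "\<lambda>J. (\<Sum>d\<in>D. (real_of_int d)\<^sup>2 * (real (card {n. n < b ^ J \<and> Delta b r n = d}) / real (b ^ J)))"
  have gl: "?g \<longlonglongrightarrow> (\<Sum>d\<in>D. (real_of_int d)\<^sup>2 * mu b r d)"
    by (intro tendsto_sum tendsto_mult tendsto_const sub_lim[OF b])
  have hl: "(\<lambda>J. C + s / real b ^ J) \<longlonglongrightarrow> C + 0"
    by (intro tendsto_add tendsto_const err_lim[OF b])
  have le: "?g J \<le> C + s / real b ^ J" if J: "J \<ge> r" for J
  proof -
    have rJ: "r < b ^ J" by (rule pow_big'[OF b J])
    have x0: "0 < real b ^ J" using b by simp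
    have "?g J = (\<Sum>n<b^J. if Delta b r n \<in> D then (real_of_int (Delta b r n))\<^sup>2 else 0) / real (b ^ J)"
      by (rule fin_sum[OF D])
    also have "\<dots> \<le> (\<Sum>n<b^J. (real_of_int (Delta b r n))\<^sup>2) / real b ^ J"
      using x0 by (simp, intro divide_right_mono sum_mono) auto
    also have "\<dots> \<le> C + s / real b ^ J"
      using sq_avg_bound[OF b rJ] by (simp add: C_def s_def)
    finally show ?thesis .
  qed
  have "(\<Sum>d\<in>D. (real_of_int d)\<^sup>2 * mu b r d) \<le> C + 0"
    by (rule LIMSEQ_le[OF gl hl]) (use le in auto)
  thus ?thesis by (simp add: C_def)
qed

lemma mass_fin:
  assumes b: "2 \<le> b" and D: "finite D" and M: "\<And>d. \<bar>d\<bar> \<le> int M \<Longrightarrow> d \<in> D"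
  shows "(\<Sum>d\<in>D. mu b r d) \<le> 1"
    and "1 - real (b ^ 2) * real (nzblocks b r) / (real M + 1)\<^sup>2 \<le> (\<Sum>d\<in>D. mu b r d)"
proof -
  define C where "C = real (b ^ 2) * real (nzblocks b r)"
  define s where "s = 2 * real (digsum b r) * real r"
  define Q where "Q = (real M + 1)\<^sup>2"
  have Q0: "0 < Q" by (simp add: Q_def)
  let ?k = "\<lambda>J. (\<Sum>d\<in>D. 1 * (real (card {n. n < b ^ J \<and> Delta b r n = d}) / real (b ^ J)))"
  have kl: "?k \<longlonglongrightarrow> (\<Sum>d\<in>D. 1 * mu b r d)"
    by (intro tendsto_sum tendsto_mult tendsto_const sub_lim[OF b])
  have keq: "?k J = (\<Sum>n<b^J. if Delta b r n \<in> D then 1 else 0) / real (b ^ J)" for J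
    using fin_sum[OF D, of "\<lambda>_. 1" "b^J" b r] by (simp only: mult_1)
  have k1: "?k J \<le> 1" for J
  proof -
    have "(\<Sum>n<b^J. if Delta b r n \<in> D then 1 else (0::real)) \<le> (\<Sum>n<b^J. 1)"
      by (intro sum_mono) auto
    thus ?thesis unfolding keq using b by (simp add: divide_le_eq_1)
  qed
  show "(\<Sum>d\<in>D. mu b r d) \<le> 1"
    using LIMSEQ_le[OF kl tendsto_const[of 1]] k1 by auto
  have ll: "(\<lambda>J. 1 - (C + s / real b ^ J) / Q) \<longlonglongrightarrow> 1 - (C + 0) / Q"
    by (intro tendsto_diff tendsto_divide tendsto_add tendsto_const err_lim[OF b]) (use Q0 in auto)
  have le: "1 - (C + s / real b ^ J) / Q \<le> ?k J" if J: "J \<ge> r" for J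
  proof -
    have rJ: "r < b ^ J" by (rule pow_big'[OF b J])
    have x0: "0 < real b ^ J" using b by simp
    have pt: "1 - (real_of_int (Delta b r n))\<^sup>2 / Q \<le> (if Delta b r n \<in> D then 1 else 0)" for n
    proof (cases "Delta b r n \<in> D")
      case True thus ?thesis using Q0 by simp
    next
      case False
      hence "\<bar>Delta b r n\<bar> \<ge> int M + 1" using M by force
      hence "real M + 1 \<le> \<bar>real_of_int (Delta b r n)\<bar>" by linarith
      hence "(real M + 1)\<^sup>2 \<le> \<bar>real_of_int (Delta b r n)\<bar>\<^sup>2"
        by (intro power_mono) auto
      hence "Q \<le> (real_of_int (Delta b r n))\<^sup>2" by (simp add: Q_def)
      thus ?thesis using False Q0 by (simp add: le_divide_eq)
    qed
    have "(\<Sum>n<b^J. 1 - (real_of_int (Delta b r n))\<^sup>2 / Q) \<le> (\<Sum>n<b^J. if Delta b r n \<in> D then 1 else (0::real))"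
      by (intro sum_mono pt)
    moreover have "(\<Sum>n<b^J. 1 - (real_of_int (Delta b r n))\<^sup>2 / Q) = real b ^ J - (\<Sum>n<b^J. (real_of_int (Delta b r n))\<^sup>2) / Q"
      by (simp add: sum_subtractf sum_divide_distrib)
    ultimately have "real b ^ J - (\<Sum>n<b^J. (real_of_int (Delta b r n))\<^sup>2) / Q \<le> (\<Sum>n<b^J. if Delta b r n \<in> D then 1 else (0::real))"
      by simp
    hence "(real b ^ J - (\<Sum>n<b^J. (real_of_int (Delta b r n))\<^sup>2) / Q) / real b ^ J \<le> (\<Sum>n<b^J. if Delta b r n \<in> D then 1 else (0::real)) / real b ^ J"
      using x0 by (intro divide_right_mono) auto
    hence "(real b ^ J - (\<Sum>n<b^J. (real_of_int (Delta b r n))\<^sup>2) / Q) / real b ^ J \<le> ?k J"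
      unfolding keq by simp
    moreover have "(real b ^ J - (\<Sum>n<b^J. (real_of_int (Delta b r n))\<^sup>2) / Q) / real b ^ J
        = 1 - ((\<Sum>n<b^J. (real_of_int (Delta b r n))\<^sup>2) / real b ^ J) / Q"
      using x0 Q0 by (simp add: field_simps)
    moreover have "((\<Sum>n<b^J. (real_of_int (Delta b r n))\<^sup>2) / real b ^ J) / Q \<le> (C + s / real b ^ J) / Q"
      using sq_avg_bound[OF b rJ] Q0 by (intro divide_right_mono) (auto simp: C_def s_def)
    ultimately show ?thesis by linarith
  qed
  have "1 - (C + 0) / Q \<le> (\<Sum>d\<in>D. 1 * mu b r d)"
    by (rule LIMSEQ_le[OF ll kl]) (use le in auto)
  thus "1 - real (b ^ 2) * real (nzblocks b r) / (real M + 1)\<^sup>2 \<le> (\<Sum>d\<in>D. mu b r d)"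
    by (simp add: C_def Q_def)
qed



lemma abs_le_sq1: fixes x :: real shows "\<bar>x\<bar> \<le> x\<^sup>2 + 1"
proof (cases "\<bar>x\<bar> \<le> 1")
  case True thus ?thesis by (simp add: add_increasing)
next
  case False
  hence "\<bar>x\<bar> * 1 \<le> \<bar>x\<bar> * \<bar>x\<bar>" by (intro mult_left_mono) auto
  thus ?thesis by (simp add: power2_eq_square abs_mult_self_eq)
qed

theorem mainTheorem15:
  fixes b r :: nat
  assumes "2 \<le> b" and "1 \<le> r"
  shows "mu_var b r \<le> real (b ^ 2) * real (nzblocks b r)"
proof -
  have b: "2 \<le> b" by fact
  define C where "C = real (b ^ 2) * real (nzblocks b r)"
  define \<mu> where "\<mu> = mu b r"
  have C0: "0 \<le> C" by (simp add: C_def)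
  have nn: "0 \<le> \<mu> d" for d using mu_nonneg[OF b] by (simp add: \<mu>_def)
  have hs: "(\<mu> has_sum 1) UNIV"
    unfolding has_sum_def
  proof (rule tendsto_iff[THEN iffD2], intro allI impI)
    fix e :: real assume e: "0 < e"
    obtain M :: nat where M: "C / e < real M" using reals_Archimedean2 by blast
    have QM: "C / (real M + 1)\<^sup>2 < e"
    proof -
      have "C < real M * e" using M e by (simp add: divide_less_eq)
      moreover have "real M \<le> (real M + 1)\<^sup>2" by (simp add: power2_eq_square algebra_simps)
      hence "real M * e \<le> (real M + 1)\<^sup>2 * e" using e by (intro mult_right_mono) auto
      ultimately have "C < e * (real M + 1)\<^sup>2" by (simp add: mult.commute)
      moreover have "0 < (real M + 1)\<^sup>2" by simp
      ultimately show ?thesis by (simp add: divide_less_eq mult.commute)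
    qed
    show "\<forall>\<^sub>F D in finite_subsets_at_top UNIV. dist (sum \<mu> D) 1 < e"
      unfolding eventually_finite_subsets_at_top
    proof (intro exI conjI allI impI)
      show "finite {-int M..int M}" by simp
      show "{-int M..int M} \<subseteq> UNIV" by simp
      fix Y assume Y: "finite Y \<and> {-int M..int M} \<subseteq> Y \<and> Y \<subseteq> UNIV"
      have Mi: "d \<in> Y" if "\<bar>d\<bar> \<le> int M" for d
      proof -
        have "d \<in> {-int M..int M}" using that by (simp add: abs_le_iff)
        thus ?thesis using Y by blast
      qed
      have "sum \<mu> Y \<le> 1" "1 - C / (real M + 1)\<^sup>2 \<le> sum \<mu> Y"
        using mass_fin[OF b _ Mi] Y by (auto simp: \<mu>_def C_def)
      thus "dist (sum \<mu> Y) 1 < e" using QM by (simp add: dist_real_def abs_less_iff)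
    qed
  qed
  have s0: "\<mu> summable_on UNIV" using hs by (rule has_sum_imp_summable)
  have i0: "infsum \<mu> UNIV = 1" using hs by (rule infsumI)
  define f2 where "f2 = (\<lambda>d::int. (real_of_int d)\<^sup>2 * \<mu> d)"
  define f1 where "f1 = (\<lambda>d::int. real_of_int d * \<mu> d)"
  have fin2: "sum f2 F \<le> C" if "finite F" for F
    using second_moment_fin[OF b that] by (simp add: f2_def \<mu>_def C_def)
  have s2: "f2 summable_on UNIV"
  proof (rule nonneg_bdd_above_summable_on)
    show "0 \<le> f2 x" for x using nn by (simp add: f2_def)
    show "bdd_above (sum f2 ` {F. F \<subseteq> UNIV \<and> finite F})"
      by (rule bdd_aboveI2[where M = C]) (use fin2 in auto)
  qed
  have i2: "infsum f2 UNIV \<le> C" by (rule infsum_le_finite_sums[OF s2]) (use fin2 in auto)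
  have sg: "(\<lambda>d. f2 d + \<mu> d) summable_on UNIV" by (rule summable_on_add[OF s2 s0])
  have s1: "f1 summable_on UNIV"
  proof -
    have A: "(\<lambda>d. norm (f2 d + \<mu> d)) summable_on UNIV"
      using summable_on_iff_abs_summable_on_real[THEN iffD1, OF sg] .
    have B: "norm (f1 d) \<le> norm (f2 d + \<mu> d)" for d
    proof -
      have "\<bar>real_of_int d\<bar> * \<mu> d \<le> ((real_of_int d)\<^sup>2 + 1) * \<mu> d"
        using nn[of d] abs_le_sq1[of "real_of_int d"] by (intro mult_right_mono) auto
      moreover have "0 \<le> ((real_of_int d)\<^sup>2 + 1) * \<mu> d" using nn[of d] by simp
      ultimately show ?thesis using nn[of d] by (simp add: f1_def f2_def abs_mult algebra_simps)
    qed
    have "(\<lambda>d. norm (f1 d)) summable_on UNIV" by (rule Infinite_Sum.abs_summable_on_comparison_test[OF A B])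
    thus ?thesis using summable_on_iff_abs_summable_on_real[THEN iffD2] by blast
  qed
  have s3: "(\<lambda>d. (-2 * infsum f1 UNIV) * f1 d) summable_on UNIV" by (rule summable_on_cmult_right[OF s1])
  have s5': "(\<lambda>d. (infsum f1 UNIV)\<^sup>2 * \<mu> d) summable_on UNIV" by (rule summable_on_cmult_right[OF s0])
  define m where "m = infsum f1 UNIV"
  note s3 = s3[folded m_def]
  note s5 = s5'[folded m_def]
  have s4: "(\<lambda>d. f2 d + (-2 * m) * f1 d) summable_on UNIV" by (rule summable_on_add[OF s2 s3])
  have mm: "mu_mean b r = m" by (simp add: mu_mean_def m_def f1_def \<mu>_def)
  have "mu_var b r = infsum (\<lambda>d. (f2 d + (-2 * m) * f1 d) + m\<^sup>2 * \<mu> d) UNIV"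
    unfolding mu_var_def mm
    by (rule infsum_cong) (simp add: f1_def f2_def \<mu>_def power2_eq_square algebra_simps)
  also have "\<dots> = infsum (\<lambda>d. f2 d + (-2 * m) * f1 d) UNIV + infsum (\<lambda>d. m\<^sup>2 * \<mu> d) UNIV"
    by (rule infsum_add[OF s4 s5])
  also have "infsum (\<lambda>d. f2 d + (-2 * m) * f1 d) UNIV = infsum f2 UNIV + infsum (\<lambda>d. (-2 * m) * f1 d) UNIV"
    by (rule infsum_add[OF s2 s3])
  also have "infsum (\<lambda>d. (-2 * m) * f1 d) UNIV = (-2 * m) * m"
    unfolding m_def by (rule infsum_cmult_right) (rule s1)
  also have "infsum (\<lambda>d. m\<^sup>2 * \<mu> d) UNIV = m\<^sup>2 * 1"
    unfolding i0[symmetric] by (rule infsum_cmult_right) (rule s0)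
  finally have "mu_var b r = infsum f2 UNIV - m\<^sup>2" by (simp add: power2_eq_square)
  also have "\<dots> \<le> C" using i2 zero_le_power2[of m] by linarith
  finally show ?thesis by (simp add: C_def)
qed


end
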